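(* Let $E$ be a finite set and $\underline I=(I_\omega)_{\omega\in E}$ a family of non-empty finite sets, and let $\mathrm{CC}(\underline I)$ be the set of causally complete spaces of input histories $\Theta$ with $E^\Theta=E$ and $I^\Theta_\omega=I_\omega$ for all $\omega\in E$. Then for all $\Theta,\Theta'\in\mathrm{CC}(\underline I)$ the meet $\Theta\wedge\Theta'$ lies in $\mathrm{CC}(\underline I)$; and if $|E|\ge 2$, there exist $\Theta,\Theta'\in\mathrm{CC}(\underline I)$ whose join $\Theta\vee\Theta'$ does not lie in $\mathrm{CC}(\underline I)$.
   Context: Partial functions on $\underline I$: $f$ with $\mathrm{dom}(f)\subseteq E$, $f(\omega)\in I_\omega$, ordered by restriction. Compatible = agreeing on common domain; compatible $\mathcal F$ has join $\bigvee\mathcal F$ (union). $\Theta$ is $\vee$-prime if for compatible $\mathcal F\subseteq\Theta$ with $\bigvee\mathcal F\in\Theta$ we have $\bigvee\mathcal F\in\mathcal F$. A space of input histories is a finite $\vee$-prime set of partial functions; $E^\Theta=\bigcup_{h\in\Theta}\mathrm{dom}(h)$, $I^\Theta_\omega=\{h(\omega):h\in\Theta,\omega\in\mathrm{dom}(h)\}$, $\mathrm{Ext}(\Theta)=\{\bigvee\mathcal F:\emptyset\ne\mathcal F\subseteq\Theta\text{ compatible}\}$. Free-choice: maximal elements of $\mathrm{Ext}(\Theta)$ are exactly the total functions in $\prod_{\omega\in E^\Theta}I^\Theta_\omega$. $\mathrm{tips}_\Theta(h)=\mathrm{dom}(h)\setminus\bigcup\{\mathrm{dom}(k):k\in\mathrm{Ext}(\Theta),k<h\}$.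 Causally complete: free-choice and $|\mathrm{tips}_\Theta(h)|=1$ for all $h\in\Theta$. For a set $W$, $\mathrm{Prime}(W)=\{w\in W:\text{for all compatible }\mathcal F\subseteq W,\ w=\bigvee\mathcal F\Rightarrow w\in\mathcal F\}$. Meet and join of spaces: $\Theta\wedge\Theta'=\mathrm{Prime}(\mathrm{Ext}(\Theta)\cup\mathrm{Ext}(\Theta'))$, $\Theta\vee\Theta'=\mathrm{Prime}(\mathrm{Ext}(\Theta)\cap\mathrm{Ext}(\Theta'))$. *)

theory Defs
  imports Main
begin

definition pf_on :: "'e set \<Rightarrow> ('e \<Rightarrow> 'i set) \<Rightarrow> ('e \<rightharpoonup> 'i) \<Rightarrow> bool" where
  "pf_on E I f \<longleftrightarrow> dom f \<subseteq> E \<and> (\<forall>\<omega>\<in>dom f. the (f \<omega>) \<in> I \<omega>)"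

definition pf_less :: "('e \<rightharpoonup> 'i) \<Rightarrow> ('e \<rightharpoonup> 'i) \<Rightarrow> bool" where
  "pf_less f g \<longleftrightarrow> f \<subseteq>\<^sub>m g \<and> f \<noteq> g"

definition compatible :: "('e \<rightharpoonup> 'i) set \<Rightarrow> bool" where
  "compatible F \<longleftrightarrow> (\<forall>f\<in>F. \<forall>g\<in>F. \<forall>\<omega>\<in>dom f \<inter> dom g. f \<omega> = g \<omega>)"

text \<open>Join (union) of a family of partial functions (meaningful for compatible families).\<close>
definition pf_join :: "('e \<rightharpoonup> 'i) set \<Rightarrow> ('e \<rightharpoonup> 'i)" where
  "pf_join F = (\<lambda>\<omega>. if \<exists>f\<in>F. \<omega> \<in> dom f then (SOME f. f \<in> F \<and> \<omega> \<in> dom f) \<omega> else None)"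

definition vee_prime :: "('e \<rightharpoonup> 'i) set \<Rightarrow> bool" where
  "vee_prime \<Theta> \<longleftrightarrow> (\<forall>F. F \<subseteq> \<Theta> \<and> compatible F \<and> pf_join F \<in> \<Theta> \<longrightarrow> pf_join F \<in> F)"

definition space_of_histories :: "'e set \<Rightarrow> ('e \<Rightarrow> 'i set) \<Rightarrow> ('e \<rightharpoonup> 'i) set \<Rightarrow> bool" where
  "space_of_histories E I \<Theta> \<longleftrightarrow> finite \<Theta> \<and> (\<forall>h\<in>\<Theta>. pf_on E I h) \<and> vee_prime \<Theta>"

definition events :: "('e \<rightharpoonup> 'i) set \<Rightarrow> 'e set" where
  "events \<Theta> = (\<Union>h\<in>\<Theta>. dom h)"

definition inputs :: "('e \<rightharpoonup> 'i) set \<Rightarrow> 'e \<Rightarrow> 'i set" where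
  "inputs \<Theta> \<omega> = {the (h \<omega>) | h. h \<in> \<Theta> \<and> \<omega> \<in> dom h}"

definition Ext :: "('e \<rightharpoonup> 'i) set \<Rightarrow> ('e \<rightharpoonup> 'i) set" where
  "Ext \<Theta> = {pf_join F | F. F \<noteq> {} \<and> F \<subseteq> \<Theta> \<and> compatible F}"

definition free_choice :: "('e \<rightharpoonup> 'i) set \<Rightarrow> bool" where
  "free_choice \<Theta> \<longleftrightarrow>
     {h \<in> Ext \<Theta>. \<not> (\<exists>k\<in>Ext \<Theta>. pf_less h k)} =
     {h. dom h = events \<Theta> \<and> (\<forall>\<omega>\<in>events \<Theta>. the (h \<omega>) \<in> inputs \<Theta> \<omega>)}"

definition tips :: "('e \<rightharpoonup> 'i) set \<Rightarrow> ('e \<rightharpoonup> 'i) \<Rightarrow> 'e set" where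
  "tips \<Theta> h = dom h - (\<Union>{dom k | k. k \<in> Ext \<Theta> \<and> pf_less k h})"

definition causally_complete :: "('e \<rightharpoonup> 'i) set \<Rightarrow> bool" where
  "causally_complete \<Theta> \<longleftrightarrow> free_choice \<Theta> \<and> (\<forall>h\<in>\<Theta>. card (tips \<Theta> h) = 1)"

definition Prime :: "('e \<rightharpoonup> 'i) set \<Rightarrow> ('e \<rightharpoonup> 'i) set" where
  "Prime W = {w \<in> W. \<forall>F. F \<subseteq> W \<and> compatible F \<and> w = pf_join F \<longrightarrow> w \<in> F}"

definition hist_meet :: "('e \<rightharpoonup> 'i) set \<Rightarrow> ('e \<rightharpoonup> 'i) set \<Rightarrow> ('e \<rightharpoonup> 'i) set" where
  "hist_meet \<Theta> \<Theta>' = Prime (Ext \<Theta> \<union> Ext \<Theta>')"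

definition hist_join :: "('e \<rightharpoonup> 'i) set \<Rightarrow> ('e \<rightharpoonup> 'i) set \<Rightarrow> ('e \<rightharpoonup> 'i) set" where
  "hist_join \<Theta> \<Theta>' = Prime (Ext \<Theta> \<inter> Ext \<Theta>')"

definition CC :: "'e set \<Rightarrow> ('e \<Rightarrow> 'i set) \<Rightarrow> ('e \<rightharpoonup> 'i) set set" where
  "CC E I = {\<Theta>. space_of_histories E I \<Theta> \<and> causally_complete \<Theta> \<and>
                 events \<Theta> = E \<and> (\<forall>\<omega>\<in>E. inputs \<Theta> \<omega> = I \<omega>)}"

end

theory Submission
  imports Defs
begin

lemma pf_join_apply:
  assumes "compatible F" "f \<in> F" "\<omega> \<in> dom f"
  shows "pf_join F \<omega> = f \<omega>"
proof -
  have ex: "\<exists>f\<in>F. \<omega> \<in> dom f" using assms by blast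
  let ?g = "SOME f. f \<in> F \<and> \<omega> \<in> dom f"
  have g: "?g \<in> F \<and> \<omega> \<in> dom ?g" by (rule someI[of _ f]) (use assms in simp)
  have "pf_join F \<omega> = ?g \<omega>" using ex by (simp add: pf_join_def)
  also have "\<dots> = f \<omega>" using assms(1) g assms unfolding compatible_def by blast
  finally show ?thesis .
qed

lemma pf_join_le: "compatible F \<Longrightarrow> f \<in> F \<Longrightarrow> f \<subseteq>\<^sub>m pf_join F"
  by (auto simp: map_le_def pf_join_apply)

lemma dom_pf_join: "dom (pf_join F) = \<Union>(dom ` F)"
proof
  show "dom (pf_join F) \<subseteq> \<Union>(dom ` F)"
    by (auto simp: pf_join_def split: if_splits)
next
  show "\<Union>(dom ` F) \<subseteq> dom (pf_join F)"
  proof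
    fix \<omega> assume "\<omega> \<in> \<Union>(dom ` F)"
    then obtain f where f: "f \<in> F" "\<omega> \<in> dom f" by blast
    let ?g = "SOME f. f \<in> F \<and> \<omega> \<in> dom f"
    have g: "?g \<in> F \<and> \<omega> \<in> dom ?g" by (rule someI[of _ f]) (use f in simp)
    show "\<omega> \<in> dom (pf_join F)" using f g unfolding pf_join_def by (auto simp: dom_def)
  qed
qed

lemma pf_join_empty: "pf_join {} = Map.empty"
  by (simp add: pf_join_def)

lemma compatible_below: "\<forall>f\<in>F. f \<subseteq>\<^sub>m g \<Longrightarrow> compatible F"
  unfolding compatible_def map_le_def by (metis IntD1 IntD2)

lemma map_le_dom_eq: "k \<subseteq>\<^sub>m h \<Longrightarrow> dom h \<subseteq> dom k \<Longrightarrow> k = h"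
  apply (rule ext)
  by (metis domIff map_le_def subsetD)

lemma pf_join_eqI:
  assumes "compatible F" "\<forall>f\<in>F. f \<subseteq>\<^sub>m g" "dom g \<subseteq> \<Union>(dom ` F)"
  shows "pf_join F = g"
proof (rule map_le_dom_eq)
  show "pf_join F \<subseteq>\<^sub>m g"
    unfolding map_le_def dom_pf_join
    using assms pf_join_apply by (fastforce simp: map_le_def)
  show "dom g \<subseteq> dom (pf_join F)" using assms(3) by (simp add: dom_pf_join)
qed

lemma Ext_char:
  "h \<in> Ext P \<longleftrightarrow> (\<exists>g\<in>P. g \<subseteq>\<^sub>m h) \<and> (\<forall>\<omega>\<in>dom h. \<exists>g\<in>P. g \<subseteq>\<^sub>m h \<and> \<omega> \<in> dom g)"
proof
  assume "h \<in> Ext P"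
  then obtain F where F: "F \<noteq> {}" "F \<subseteq> P" "compatible F" "h = pf_join F"
    unfolding Ext_def by blast
  show "(\<exists>g\<in>P. g \<subseteq>\<^sub>m h) \<and> (\<forall>\<omega>\<in>dom h. \<exists>g\<in>P. g \<subseteq>\<^sub>m h \<and> \<omega> \<in> dom g)"
    using F pf_join_le dom_pf_join by (metis UN_E all_not_in_conv subsetD)
next
  assume A: "(\<exists>g\<in>P. g \<subseteq>\<^sub>m h) \<and> (\<forall>\<omega>\<in>dom h. \<exists>g\<in>P. g \<subseteq>\<^sub>m h \<and> \<omega> \<in> dom g)"
  define F where "F = {g \<in> P. g \<subseteq>\<^sub>m h}"
  have "F \<noteq> {}" using A F_def by blast
  moreover have "compatible F" by (rule compatible_below[where g=h]) (simp add: F_def)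
  moreover have "pf_join F = h"
  proof (rule pf_join_eqI[OF \<open>compatible F\<close>])
    show "\<forall>f\<in>F. f \<subseteq>\<^sub>m h" by (simp add: F_def)
    show "dom h \<subseteq> \<Union>(dom ` F)"
    proof
      fix \<omega> assume "\<omega> \<in> dom h"
      then obtain g where "g \<in> P" "g \<subseteq>\<^sub>m h" "\<omega> \<in> dom g" using A by blast
      thus "\<omega> \<in> \<Union>(dom ` F)" unfolding F_def by blast
    qed
  qed
  moreover have "F \<subseteq> P" by (auto simp: F_def)
  ultimately show "h \<in> Ext P" unfolding Ext_def by blast
qed

lemma subset_Ext: "P \<subseteq> Ext P"
proof
  fix x assume "x \<in> P"
  thus "x \<in> Ext P" unfolding Ext_char using map_le_refl by blast
qed

lemma W_sub_Ext_Prime: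
  assumes "\<forall>w\<in>W. finite (dom w) \<and> w \<noteq> Map.empty"
  shows "W \<subseteq> Ext (Prime W)"
proof -
  have "w \<in> W \<Longrightarrow> w \<in> Ext (Prime W)" for w
  proof (induction "card (dom w)" arbitrary: w rule: less_induct)
    case less
    show ?case
    proof (cases "w \<in> Prime W")
      case True thus ?thesis using subset_Ext by blast
    next
      case False
      then obtain F where F: "F \<subseteq> W" "compatible F" "w = pf_join F" "w \<notin> F"
        using less.prems unfolding Prime_def by blast
      have fin: "finite (dom w)" and ne: "w \<noteq> Map.empty" using assms less.prems by auto
      have cov: "\<exists>g\<in>Prime W. g \<subseteq>\<^sub>m w \<and> \<omega> \<in> dom g" if "\<omega> \<in> dom w" for \<omega>
      proof -
        have "\<omega> \<in> \<Union>(dom ` F)" using that F(3) by (simp add: dom_pf_join)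
        then obtain f where f: "f \<in> F" "\<omega> \<in> dom f" by blast
        have fw: "f \<subseteq>\<^sub>m w" using pf_join_le F f by simp
        have "f \<noteq> w" using F(4) f by auto
        have "dom f \<subseteq> dom w" using fw by (rule map_le_implies_dom_le)
        moreover have "dom f \<noteq> dom w"
        proof
          assume "dom f = dom w"
          hence "f = w" using map_le_dom_eq[OF fw] by simp
          thus False using \<open>f \<noteq> w\<close> by simp
        qed
        ultimately have "dom f \<subset> dom w" by blast
        hence "card (dom f) < card (dom w)" using fin psubset_card_mono by blast
        moreover have "f \<in> W" using F f by auto
        ultimately have "f \<in> Ext (Prime W)" by (rule less.hyps)
        hence "\<forall>\<omega>\<in>dom f. \<exists>g\<in>Prime W. g \<subseteq>\<^sub>m f \<and> \<omega> \<in> dom g" unfolding Ext_char by blast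
        then obtain g where g: "g \<in> Prime W" "g \<subseteq>\<^sub>m f" "\<omega> \<in> dom g" using f(2) by blast
        have "g \<subseteq>\<^sub>m w" using map_le_trans[OF g(2) fw] .
        thus ?thesis using g by blast
      qed
      obtain \<omega> where "\<omega> \<in> dom w" using ne by (metis dom_eq_empty_conv ex_in_conv)
      then obtain g0 where "g0 \<in> Prime W" "g0 \<subseteq>\<^sub>m w" using cov by blast
      hence "(\<exists>g\<in>Prime W. g \<subseteq>\<^sub>m w) \<and> (\<forall>\<omega>\<in>dom w. \<exists>g\<in>Prime W. g \<subseteq>\<^sub>m w \<and> \<omega> \<in> dom g)"
        using cov by blast
      then show ?thesis unfolding Ext_char .
    qed
  qed
  thus ?thesis by blast
qed

lemma vee_prime_nonempty: "vee_prime \<Theta> \<Longrightarrow> Map.empty \<notin> \<Theta>"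
  unfolding vee_prime_def using pf_join_empty[where 'a='a and 'b='b]
  by (metis compatible_def empty_iff empty_subsetI)

lemma Ext_pf_on:
  assumes "\<forall>h\<in>\<Theta>. pf_on E I h" "h \<in> Ext \<Theta>"
  shows "pf_on E I h"
  unfolding pf_on_def
proof
  show "dom h \<subseteq> E"
  proof
    fix \<omega> assume "\<omega> \<in> dom h"
    then obtain g where "g \<in> \<Theta>" "g \<subseteq>\<^sub>m h" "\<omega> \<in> dom g" using assms(2) unfolding Ext_char by blast
    thus "\<omega> \<in> E" using assms(1) unfolding pf_on_def by blast
  qed
  show "\<forall>\<omega>\<in>dom h. the (h \<omega>) \<in> I \<omega>"
  proof
    fix \<omega> assume "\<omega> \<in> dom h"
    then obtain g where g: "g \<in> \<Theta>" "g \<subseteq>\<^sub>m h" "\<omega> \<in> dom g" using assms(2) unfolding Ext_char by blast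
    have "h \<omega> = g \<omega>" using g(2,3) by (simp add: map_le_def)
    moreover have "the (g \<omega>) \<in> I \<omega>" using assms(1) g(1,3) unfolding pf_on_def by blast
    ultimately show "the (h \<omega>) \<in> I \<omega>" by simp
  qed
qed

lemma map_le_empty_iff: "f \<subseteq>\<^sub>m Map.empty \<longleftrightarrow> f = Map.empty"
  by (auto simp: map_le_def)

lemma free_choice_crit:
  assumes "events \<Theta> = E" "\<forall>\<omega>\<in>E. inputs \<Theta> \<omega> = I \<omega>" "\<forall>\<omega>\<in>E. I \<omega> \<noteq> {}"
    "\<forall>h\<in>Ext \<Theta>. pf_on E I h"
    "\<forall>t. dom t = E \<and> (\<forall>\<omega>\<in>E. the (t \<omega>) \<in> I \<omega>) \<longrightarrow> t \<in> Ext \<Theta>"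
  shows "free_choice \<Theta>"
proof -
  have R: "{h. dom h = events \<Theta> \<and> (\<forall>\<omega>\<in>events \<Theta>. the (h \<omega>) \<in> inputs \<Theta> \<omega>)}
     = {h. dom h = E \<and> (\<forall>\<omega>\<in>E. the (h \<omega>) \<in> I \<omega>)}" using assms(1,2) by auto
  show ?thesis unfolding free_choice_def R
  proof (intro equalityI subsetI)
    fix h assume "h \<in> {h \<in> Ext \<Theta>. \<not> (\<exists>k\<in>Ext \<Theta>. pf_less h k)}"
    hence h: "h \<in> Ext \<Theta>" "\<forall>k\<in>Ext \<Theta>. \<not> pf_less h k" by auto
    define t where "t = (\<lambda>e. if e \<in> dom h then h e else if e \<in> E then Some (SOME y. y \<in> I e) else None)"
    have pf: "pf_on E I h" using h assms(4) by auto
    have "dom t = E"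
    proof
      show "dom t \<subseteq> E" using pf unfolding t_def pf_on_def
        by (auto split: if_splits) (meson domI subsetD)
      show "E \<subseteq> dom t" unfolding t_def by auto
    qed
    moreover have "\<forall>\<omega>\<in>E. the (t \<omega>) \<in> I \<omega>"
      using pf assms(3) unfolding t_def pf_on_def by (auto simp: some_in_eq)
    ultimately have "t \<in> Ext \<Theta>" using assms(5) by blast
    moreover have "h \<subseteq>\<^sub>m t" by (auto simp: t_def map_le_def)
    ultimately have "h = t" using h(2) unfolding pf_less_def by blast
    thus "h \<in> {h. dom h = E \<and> (\<forall>\<omega>\<in>E. the (h \<omega>) \<in> I \<omega>)}"
      using \<open>dom t = E\<close> \<open>\<forall>\<omega>\<in>E. the (t \<omega>) \<in> I \<omega>\<close> by simp
  next
    fix h assume h: "h \<in> {h. dom h = E \<and> (\<forall>\<omega>\<in>E. the (h \<omega>) \<in> I \<omega>)}"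
    hence hE: "h \<in> Ext \<Theta>" using assms(5) by blast
    have "\<not> pf_less h k" if "k \<in> Ext \<Theta>" for k
    proof
      assume "pf_less h k"
      moreover have "dom k \<subseteq> dom h" using that assms(4) h unfolding pf_on_def by auto
      ultimately show False using map_le_dom_eq unfolding pf_less_def by blast
    qed
    thus "h \<in> {h \<in> Ext \<Theta>. \<not> (\<exists>k\<in>Ext \<Theta>. pf_less h k)}" using hE by blast
  qed
qed

lemma tips_vee_prime:
  assumes "\<forall>h\<in>\<Theta>. card (tips \<Theta> h) = 1"
  shows "vee_prime \<Theta>"
  unfolding vee_prime_def
proof (intro allI impI)
  fix F assume A: "F \<subseteq> \<Theta> \<and> compatible F \<and> pf_join F \<in> \<Theta>"
  show "pf_join F \<in> F"
  proof (rule ccontr)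
    assume nF: "pf_join F \<notin> F"
    let ?h = "pf_join F"
    have "tips \<Theta> ?h \<noteq> {}" using assms A by (metis card.empty zero_neq_one)
    then obtain \<omega> where w: "\<omega> \<in> tips \<Theta> ?h" by blast
    hence "\<omega> \<in> dom ?h" by (simp add: tips_def)
    hence "\<omega> \<in> \<Union>(dom ` F)" by (simp add: dom_pf_join)
    then obtain f where f: "f \<in> F" "\<omega> \<in> dom f" by blast
    have "f \<subseteq>\<^sub>m ?h" using pf_join_le A f by blast
    moreover have "f \<noteq> ?h" using nF f by auto
    moreover have "f \<in> Ext \<Theta>" using subset_Ext A f by blast
    ultimately have "\<omega> \<in> \<Union>{dom k | k. k \<in> Ext \<Theta> \<and> pf_less k ?h}"
      using f unfolding pf_less_def by blast
    thus False using w by (simp add: tips_def)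
  qed
qed


lemma card1_sub: "A \<subseteq> B \<Longrightarrow> card B = 1 \<Longrightarrow> A \<noteq> {} \<Longrightarrow> card A = 1"
  by (metis card_1_singletonE subset_singletonD)

lemma meet_CC:
  assumes finE: "finite E" and Ine: "\<forall>\<omega>\<in>E. I \<omega> \<noteq> {}"
    and T: "\<Theta> \<in> CC E I" and T': "\<Theta>' \<in> CC E I"
  shows "hist_meet \<Theta> \<Theta>' \<in> CC E I"
proof -
  define W where "W = Ext \<Theta> \<union> Ext \<Theta>'"
  define \<Psi> where "\<Psi> = Prime W"
  have hm: "hist_meet \<Theta> \<Theta>' = \<Psi>" by (simp add: hist_meet_def \<Psi>_def W_def)
  from T have sT: "finite \<Theta>" "\<forall>h\<in>\<Theta>. pf_on E I h" "vee_prime \<Theta>" "free_choice \<Theta>"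
    "\<forall>h\<in>\<Theta>. card (tips \<Theta> h) = 1" "events \<Theta> = E" "\<forall>\<omega>\<in>E. inputs \<Theta> \<omega> = I \<omega>"
    by (auto simp: CC_def space_of_histories_def causally_complete_def)
  from T' have sT': "finite \<Theta>'" "\<forall>h\<in>\<Theta>'. pf_on E I h" "vee_prime \<Theta>'" "free_choice \<Theta>'"
    "\<forall>h\<in>\<Theta>'. card (tips \<Theta>' h) = 1" "events \<Theta>' = E" "\<forall>\<omega>\<in>E. inputs \<Theta>' \<omega> = I \<omega>"
    by (auto simp: CC_def space_of_histories_def causally_complete_def)
  have totT: "t \<in> Ext \<Theta>" if "dom t = E" "\<forall>\<omega>\<in>E. the (t \<omega>) \<in> I \<omega>" for t
  proof -
    have "t \<in> {h. dom h = events \<Theta> \<and> (\<forall>\<omega>\<in>events \<Theta>. the (h \<omega>) \<in> inputs \<Theta> \<omega>)}"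
      using that sT(6,7) by simp
    hence "t \<in> {h \<in> Ext \<Theta>. \<not> (\<exists>k\<in>Ext \<Theta>. pf_less h k)}"
      using sT(4) unfolding free_choice_def by blast
    thus ?thesis by blast
  qed
  have pfW: "\<forall>w\<in>W. pf_on E I w" unfolding W_def using Ext_pf_on sT(2) sT'(2) by blast
  have neW: "w \<noteq> Map.empty" if "w \<in> W" for w
  proof
    assume e: "w = Map.empty"
    have "w \<in> Ext \<Theta> \<or> w \<in> Ext \<Theta>'" using that W_def by blast
    then obtain g where "g \<in> \<Theta> \<or> g \<in> \<Theta>'" "g \<subseteq>\<^sub>m w"
      unfolding Ext_char by blast
    hence "g \<in> \<Theta> \<or> g \<in> \<Theta>'" "g = Map.empty" using e map_le_empty_iff by auto
    thus False using vee_prime_nonempty sT(3) sT'(3) by blast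
  qed
  have finW: "finite (dom w)" if "w \<in> W" for w
    using pfW that finE unfolding pf_on_def by (meson finite_subset)
  have WE: "W \<subseteq> Ext \<Psi>" unfolding \<Psi>_def by (rule W_sub_Ext_Prime) (use neW finW in blast)
  have PsiW: "\<Psi> \<subseteq> W" unfolding \<Psi>_def Prime_def by blast
  have prim: "\<And>F. F \<subseteq> W \<Longrightarrow> compatible F \<Longrightarrow> h = pf_join F \<Longrightarrow> h \<in> F" if "h \<in> \<Psi>" for h
    using that unfolding \<Psi>_def Prime_def by blast
  have PsiSub: "h \<in> \<Theta> \<or> h \<in> \<Theta>'" if h: "h \<in> \<Psi>" for h
  proof -
    have "h \<in> Ext \<Theta> \<or> h \<in> Ext \<Theta>'" using h PsiW W_def by blast
    then obtain F where F: "F \<noteq> {}" "F \<subseteq> \<Theta> \<or> F \<subseteq> \<Theta>'" "compatible F" "h = pf_join F"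
      unfolding Ext_def by blast
    have "F \<subseteq> W" using F(2) subset_Ext[of \<Theta>] subset_Ext[of \<Theta>'] unfolding W_def by blast
    hence "h \<in> F" using prim[OF h] F by blast
    thus ?thesis using F(2) by blast
  qed
  have pfPsi: "\<forall>h\<in>\<Psi>. pf_on E I h" using PsiSub sT(2) sT'(2) by blast
  have pfExtPsi: "\<forall>h\<in>Ext \<Psi>. pf_on E I h" using Ext_pf_on[OF pfPsi] by blast
  have finPsi: "finite \<Psi>"
    by (rule finite_subset[of _ "\<Theta> \<union> \<Theta>'"]) (use PsiSub sT(1) sT'(1) in auto)
  have totPsi: "t \<in> Ext \<Psi>" if "dom t = E" "\<forall>\<omega>\<in>E. the (t \<omega>) \<in> I \<omega>" for t
    using totT[OF that] WE unfolding W_def by blast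
  have cover: "\<exists>g\<in>\<Psi>. \<omega> \<in> dom g \<and> g \<omega> = Some x" if "\<omega> \<in> E" "x \<in> I \<omega>" for \<omega> x
  proof -
    define t where "t = (\<lambda>e. if e \<in> E then Some (if e = \<omega> then x else SOME y. y \<in> I e) else None)"
    have "dom t = E" by (auto simp: t_def split: if_splits)
    moreover have "\<forall>\<omega>\<in>E. the (t \<omega>) \<in> I \<omega>" using Ine that by (auto simp: t_def some_in_eq)
    ultimately have "t \<in> Ext \<Psi>" by (rule totPsi)
    moreover have "\<omega> \<in> dom t" using that by (simp add: t_def dom_def)
    ultimately obtain g where "g \<in> \<Psi>" "g \<subseteq>\<^sub>m t" "\<omega> \<in> dom g" unfolding Ext_char by blast
    moreover have "t \<omega> = Some x" using that by (simp add: t_def)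
    ultimately show ?thesis unfolding map_le_def by metis
  qed
  have evPsi: "events \<Psi> = E"
  proof
    show "events \<Psi> \<subseteq> E" using pfPsi unfolding events_def pf_on_def by blast
    show "E \<subseteq> events \<Psi>"
    proof
      fix \<omega> assume "\<omega> \<in> E"
      then obtain x where "x \<in> I \<omega>" using Ine by blast
      then show "\<omega> \<in> events \<Psi>" using cover \<open>\<omega> \<in> E\<close> unfolding events_def by blast
    qed
  qed
  have inPsi: "\<forall>\<omega>\<in>E. inputs \<Psi> \<omega> = I \<omega>"
  proof
    fix \<omega> assume w: "\<omega> \<in> E"
    show "inputs \<Psi> \<omega> = I \<omega>"
    proof
      show "inputs \<Psi> \<omega> \<subseteq> I \<omega>" using pfPsi unfolding inputs_def pf_on_def by blast
      show "I \<omega> \<subseteq> inputs \<Psi> \<omega>"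
      proof
        fix x assume "x \<in> I \<omega>"
        then obtain g where "g \<in> \<Psi>" "\<omega> \<in> dom g" "g \<omega> = Some x" using cover w by blast
        thus "x \<in> inputs \<Psi> \<omega>" unfolding inputs_def by force
      qed
    qed
  qed
  have fcPsi: "free_choice \<Psi>"
    by (rule free_choice_crit[OF evPsi inPsi Ine pfExtPsi]) (use totPsi in blast)
  have tipsne: "tips \<Psi> h \<noteq> {}" if h: "h \<in> \<Psi>" for h
  proof
    assume te: "tips \<Psi> h = {}"
    define F where "F = {g \<in> \<Psi>. pf_less g h}"
    have FW: "F \<subseteq> W" using PsiW by (auto simp: F_def)
    have Fb: "\<forall>f\<in>F. f \<subseteq>\<^sub>m h" by (simp add: F_def pf_less_def)
    have cF: "compatible F" by (rule compatible_below[OF Fb])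
    have "dom h \<subseteq> \<Union>(dom ` F)"
    proof
      fix \<omega> assume "\<omega> \<in> dom h"
      moreover have "dom h \<subseteq> \<Union>{dom k | k. k \<in> Ext \<Psi> \<and> pf_less k h}" using te by (simp add: tips_def)
      ultimately have "\<omega> \<in> \<Union>{dom k | k. k \<in> Ext \<Psi> \<and> pf_less k h}" by blast
      then obtain k where k: "k \<in> Ext \<Psi>" "pf_less k h" "\<omega> \<in> dom k" by blast
      then obtain g where g: "g \<in> \<Psi>" "g \<subseteq>\<^sub>m k" "\<omega> \<in> dom g" unfolding Ext_char by blast
      have "g \<subseteq>\<^sub>m h" using g k map_le_trans unfolding pf_less_def by blast
      moreover have "g \<noteq> h" using g k map_le_antisym unfolding pf_less_def by blast
      ultimately have "g \<in> F" using g by (simp add: F_def pf_less_def)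
      thus "\<omega> \<in> \<Union>(dom ` F)" using g by blast
    qed
    hence "pf_join F = h" using pf_join_eqI[OF cF Fb] by blast
    hence "h \<in> F" using prim[OF h FW cF] by simp
    thus False by (simp add: F_def pf_less_def)
  qed
  have ExtSub: "Ext \<Theta> \<subseteq> Ext \<Psi>" "Ext \<Theta>' \<subseteq> Ext \<Psi>" using WE unfolding W_def by auto
  have tipsPsi: "card (tips \<Psi> h) = 1" if h: "h \<in> \<Psi>" for h
  proof (cases "h \<in> \<Theta>")
    case True
    have "tips \<Psi> h \<subseteq> tips \<Theta> h" using ExtSub(1) unfolding tips_def by blast
    thus ?thesis using card1_sub sT(5) True tipsne[OF h] by blast
  next
    case False
    hence "h \<in> \<Theta>'" using PsiSub h by blast
    have "tips \<Psi> h \<subseteq> tips \<Theta>' h" using ExtSub(2) unfolding tips_def by blast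
    thus ?thesis using card1_sub sT'(5) \<open>h \<in> \<Theta>'\<close> tipsne[OF h] by blast
  qed
  have vpPsi: "vee_prime \<Psi>" by (rule tips_vee_prime) (use tipsPsi in blast)
  show ?thesis unfolding hm CC_def space_of_histories_def causally_complete_def
    using finPsi pfPsi vpPsi fcPsi tipsPsi evPsi inPsi by blast
qed


lemma finite_pf_on:
  assumes "finite E" "\<forall>\<omega>\<in>E. finite (I \<omega>)"
  shows "finite {h. pf_on E I h}"
proof -
  let ?B = "\<Union>(I ` E)"
  have fB: "finite ?B" using assms by blast
  have "{h. pf_on E I h} \<subseteq> (\<Union>A\<in>Pow E. {m. dom m = A \<and> ran m \<subseteq> ?B})"
  proof
    fix h assume "h \<in> {h. pf_on E I h}"
    hence h: "dom h \<subseteq> E" "\<forall>\<omega>\<in>dom h. the (h \<omega>) \<in> I \<omega>" by (auto simp: pf_on_def)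
    have "ran h \<subseteq> ?B"
    proof
      fix y assume "y \<in> ran h"
      then obtain \<omega> where "h \<omega> = Some y" by (auto simp: ran_def)
      hence "\<omega> \<in> dom h" "the (h \<omega>) = y" by auto
      thus "y \<in> ?B" using h by blast
    qed
    thus "h \<in> (\<Union>A\<in>Pow E. {m. dom m = A \<and> ran m \<subseteq> ?B})" using h(1) by blast
  qed
  moreover have "finite (\<Union>A\<in>Pow E. {m. dom m = A \<and> ran m \<subseteq> ?B})"
  proof (rule finite_UN_I)
    show "finite (Pow E)" using assms(1) by simp
    fix A assume "A \<in> Pow E"
    hence "finite A" using assms(1) finite_subset by blast
    thus "finite {m. dom m = A \<and> ran m \<subseteq> ?B}" using fB by (rule finite_set_of_finite_maps)
  qed
  ultimately show ?thesis by (rule finite_subset)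
qed

definition star :: "'e set \<Rightarrow> ('e \<Rightarrow> 'i set) \<Rightarrow> 'e \<Rightarrow> ('e \<rightharpoonup> 'i) set" where
  "star E I c = {[c \<mapsto> x] | x. x \<in> I c} \<union>
     {[c \<mapsto> x, w \<mapsto> y] | x w y. x \<in> I c \<and> w \<in> E \<and> w \<noteq> c \<and> y \<in> I w}"

lemma star_I1: "x \<in> I c \<Longrightarrow> [c \<mapsto> x] \<in> star E I c"
  unfolding star_def by blast

lemma star_I2: "x \<in> I c \<Longrightarrow> w \<in> E \<Longrightarrow> w \<noteq> c \<Longrightarrow> y \<in> I w \<Longrightarrow> [c \<mapsto> x, w \<mapsto> y] \<in> star E I c"
  unfolding star_def by blast

lemma star_pf:
  assumes "c \<in> E" "g \<in> star E I c"
  shows "pf_on E I g \<and> c \<in> dom g"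
  using assms unfolding star_def pf_on_def by (auto split: if_splits)

lemma Ext_star:
  assumes "c \<in> E"
  shows "Ext (star E I c) = {h. pf_on E I h \<and> c \<in> dom h}"
proof (intro equalityI subsetI)
  fix h assume h: "h \<in> Ext (star E I c)"
  have "pf_on E I h" using Ext_pf_on[of "star E I c" E I h] star_pf[OF assms] h by blast
  moreover obtain g where "g \<in> star E I c" "g \<subseteq>\<^sub>m h" using h unfolding Ext_char by blast
  hence "c \<in> dom h" using star_pf[OF assms] map_le_implies_dom_le by blast
  ultimately show "h \<in> {h. pf_on E I h \<and> c \<in> dom h}" by blast
next
  fix h assume "h \<in> {h. pf_on E I h \<and> c \<in> dom h}"
  hence pf: "pf_on E I h" and c: "c \<in> dom h" by auto
  obtain xc where xc: "h c = Some xc" using c by blast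
  have xcI: "xc \<in> I c" using pf xc c unfolding pf_on_def by force
  have g0: "[c \<mapsto> xc] \<in> star E I c" "[c \<mapsto> xc] \<subseteq>\<^sub>m h"
    using xcI xc by (auto simp: star_I1 map_le_def)
  have "\<exists>g\<in>star E I c. g \<subseteq>\<^sub>m h \<and> \<omega> \<in> dom g" if w: "\<omega> \<in> dom h" for \<omega>
  proof (cases "\<omega> = c")
    case True thus ?thesis using g0 by auto
  next
    case False
    obtain y where y: "h \<omega> = Some y" using w by blast
    have "\<omega> \<in> E" "y \<in> I \<omega>" using pf w y unfolding pf_on_def by force+
    hence "[c \<mapsto> xc, \<omega> \<mapsto> y] \<in> star E I c" using xcI False by (simp add: star_I2)
    moreover have "[c \<mapsto> xc, \<omega> \<mapsto> y] \<subseteq>\<^sub>m h" using xc y by (auto simp: map_le_def)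
    ultimately show ?thesis by auto
  qed
  thus "h \<in> Ext (star E I c)" unfolding Ext_char using g0 by blast
qed

lemma tips_star:
  assumes "c \<in> E" "h \<in> star E I c"
  shows "card (tips (star E I c) h) = 1"
proof -
  have EX: "k \<in> Ext (star E I c) \<Longrightarrow> c \<in> dom k" for k using Ext_star[OF assms(1), where I=I] by auto
  have hd: "h \<in> {[c \<mapsto> x] | x. x \<in> I c} \<or>
     h \<in> {[c \<mapsto> x, w \<mapsto> y] | x w y. x \<in> I c \<and> w \<in> E \<and> w \<noteq> c \<and> y \<in> I w}"
    using assms(2) unfolding star_def Un_iff .
  consider (a) x where "h = [c \<mapsto> x]" "x \<in> I c"
    | (b) x w y where "h = [c \<mapsto> x, w \<mapsto> y]" "x \<in> I c" "w \<in> E" "w \<noteq> c" "y \<in> I w"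
  proof -
    from hd show thesis
    proof
      assume "h \<in> {[c \<mapsto> x] | x. x \<in> I c}"
      then obtain x where "h = [c \<mapsto> x]" "x \<in> I c" by (auto simp only: mem_Collect_eq)
      thus thesis using that(1) by blast
    next
      assume "h \<in> {[c \<mapsto> x, w \<mapsto> y] | x w y. x \<in> I c \<and> w \<in> E \<and> w \<noteq> c \<and> y \<in> I w}"
      then obtain x w y where "h = [c \<mapsto> x, w \<mapsto> y]" "x \<in> I c" "w \<in> E" "w \<noteq> c" "y \<in> I w"
        by (auto simp only: mem_Collect_eq)
      thus thesis using that(2) by blast
    qed
  qed
  then show ?thesis
  proof cases
    case a
    have "\<not> pf_less k h" if "k \<in> Ext (star E I c)" for k
    proof
      assume "pf_less k h"
      moreover have "dom h \<subseteq> dom k" using EX[OF that] a by auto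
      ultimately show False using map_le_dom_eq unfolding pf_less_def by blast
    qed
    hence E0: "{dom k | k. k \<in> Ext (star E I c) \<and> pf_less k h} = {}" by blast
    have "tips (star E I c) h = dom h" unfolding tips_def E0 by simp
    also have "\<dots> = {c}" using a(1) by simp
    finally have "tips (star E I c) h = {c}" .
    thus ?thesis by simp
  next
    case b
    have k0s: "[c \<mapsto> x] \<in> star E I c" using b(2) by (rule star_I1)
    have k0: "[c \<mapsto> x] \<in> Ext (star E I c)" using k0s subset_Ext by blast
    have le0: "[c \<mapsto> x] \<subseteq>\<^sub>m h" using b(1) b(4) by (simp add: map_le_def)
    have ne0: "[c \<mapsto> x] \<noteq> h"
    proof
      assume "[c \<mapsto> x] = h"
      hence "[c \<mapsto> x] w = h w" by simp
      thus False using b(1) b(4) by simp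
    qed
    have k0l: "pf_less [c \<mapsto> x] h" using le0 ne0 by (simp add: pf_less_def)
    have nw: "\<omega> \<notin> dom k" if "k \<in> Ext (star E I c)" "pf_less k h" "\<omega> = w" for k \<omega>
    proof
      assume "\<omega> \<in> dom k"
      moreover have "c \<in> dom k" using EX[OF that(1)] .
      ultimately have "dom h \<subseteq> dom k" using b(1) that(3) by simp
      thus False using map_le_dom_eq that(2) unfolding pf_less_def by blast
    qed
    have "tips (star E I c) h = {w}"
    proof
      show "tips (star E I c) h \<subseteq> {w}"
      proof
        fix z assume z: "z \<in> tips (star E I c) h"
        hence zd: "z \<in> dom h" by (simp add: tips_def)
        have "z \<noteq> c"
        proof
          assume "z = c"
          have mem: "dom [c \<mapsto> x] \<in> {dom k | k. k \<in> Ext (star E I c) \<and> pf_less k h}"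
            using k0 k0l by blast
          have zc: "z \<in> dom [c \<mapsto> x]" using \<open>z = c\<close> by simp
          have "z \<in> \<Union>{dom k | k. k \<in> Ext (star E I c) \<and> pf_less k h}"
            by (rule UnionI[OF mem zc])
          moreover have "z \<in> dom h - \<Union>{dom k | k. k \<in> Ext (star E I c) \<and> pf_less k h}"
            using z by (simp only: tips_def)
          ultimately show False by (meson DiffD2)
        qed
        thus "z \<in> {w}" using zd b(1) by (auto split: if_splits)
      qed
      have "w \<in> dom h" using b(1) by simp
      moreover have "w \<notin> \<Union>{dom k | k. k \<in> Ext (star E I c) \<and> pf_less k h}" using nw by blast
      ultimately show "{w} \<subseteq> tips (star E I c) h" unfolding tips_def by blast
    qed
    thus ?thesis by simp
  qed
qed

lemma star_CC:
  assumes finE: "finite E" and Ine: "\<forall>\<omega>\<in>E. finite (I \<omega>) \<and> I \<omega> \<noteq> {}" and c: "c \<in> E"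
  shows "star E I c \<in> CC E I"
proof -
  let ?S = "star E I c"
  have pf: "\<forall>h\<in>?S. pf_on E I h" using star_pf[OF c] by blast
  have fin: "finite ?S"
  proof -
    have "finite {h. pf_on E I h}" using finite_pf_on finE Ine by blast
    moreover have "?S \<subseteq> {h. pf_on E I h}" using pf by blast
    ultimately show ?thesis using finite_subset by blast
  qed
  have tp: "\<forall>h\<in>?S. card (tips ?S h) = 1" using tips_star[OF c] by blast
  obtain xc where xc: "xc \<in> I c" using Ine c by blast
  have ev: "events ?S = E"
  proof
    show "events ?S \<subseteq> E" using pf unfolding events_def pf_on_def by blast
    show "E \<subseteq> events ?S"
    proof
      fix w assume w: "w \<in> E"
      show "w \<in> events ?S"
      proof (cases "w = c")
        case True
        have "[c \<mapsto> xc] \<in> ?S" using xc by (rule star_I1)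
        moreover have "w \<in> dom [c \<mapsto> xc]" using True by simp
        ultimately show ?thesis unfolding events_def by blast
      next
        case False
        obtain y where "y \<in> I w" using Ine w by blast
        hence "[c \<mapsto> xc, w \<mapsto> y] \<in> ?S" using xc w False by (simp add: star_I2)
        moreover have "w \<in> dom [c \<mapsto> xc, w \<mapsto> y]" by simp
        ultimately show ?thesis unfolding events_def by blast
      qed
    qed
  qed
  have inp: "\<forall>\<omega>\<in>E. inputs ?S \<omega> = I \<omega>"
  proof
    fix w assume w: "w \<in> E"
    show "inputs ?S w = I w"
    proof
      show "inputs ?S w \<subseteq> I w" using pf unfolding inputs_def pf_on_def by blast
      show "I w \<subseteq> inputs ?S w"
      proof
        fix y assume y: "y \<in> I w"
        show "y \<in> inputs ?S w"
        proof (cases "w = c")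
          case True
          have "[c \<mapsto> y] \<in> ?S" using y True by (simp add: star_I1)
          moreover have "w \<in> dom [c \<mapsto> y] \<and> y = the ([c \<mapsto> y] w)" using True by simp
          ultimately show ?thesis unfolding inputs_def by blast
        next
          case False
          hence "[c \<mapsto> xc, w \<mapsto> y] \<in> ?S" using xc w y by (simp add: star_I2)
          moreover have "w \<in> dom [c \<mapsto> xc, w \<mapsto> y] \<and> y = the ([c \<mapsto> xc, w \<mapsto> y] w)" by simp
          ultimately show ?thesis unfolding inputs_def by blast
        qed
      qed
    qed
  qed
  have fc: "free_choice ?S"
  proof (rule free_choice_crit[OF ev inp])
    show "\<forall>\<omega>\<in>E. I \<omega> \<noteq> {}" using Ine by blast
    show "\<forall>h\<in>Ext ?S. pf_on E I h" using Ext_star[OF c] by blast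
    show "\<forall>t. dom t = E \<and> (\<forall>\<omega>\<in>E. the (t \<omega>) \<in> I \<omega>) \<longrightarrow> t \<in> Ext ?S"
    proof (intro allI impI)
      fix t assume t: "dom t = E \<and> (\<forall>\<omega>\<in>E. the (t \<omega>) \<in> I \<omega>)"
      hence "pf_on E I t \<and> c \<in> dom t" using c unfolding pf_on_def by simp
      thus "t \<in> Ext ?S" using Ext_star[OF c, where I=I] by simp
    qed
  qed
  have vp: "vee_prime ?S" by (rule tips_vee_prime[OF tp])
  show ?thesis unfolding CC_def space_of_histories_def causally_complete_def
    using fin pf vp fc tp ev inp by simp
qed

lemma join_not_CC:
  assumes finE: "finite E" and Ine: "\<forall>\<omega>\<in>E. finite (I \<omega>) \<and> I \<omega> \<noteq> {}"
    and a: "a \<in> E" and b: "b \<in> E" and ab: "a \<noteq> b"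
  shows "hist_join (star E I a) (star E I b) \<notin> CC E I"
proof
  define W where "W = {h. pf_on E I h \<and> a \<in> dom h \<and> b \<in> dom h}"
  have "Ext (star E I a) \<inter> Ext (star E I b) = W"
    unfolding Ext_star[OF a, where I=I] Ext_star[OF b, where I=I] W_def by blast
  hence jW: "hist_join (star E I a) (star E I b) = Prime W" by (simp add: hist_join_def)
  obtain xa xb where xa: "xa \<in> I a" and xb: "xb \<in> I b" using Ine a b by blast
  define h0 where "h0 = [a \<mapsto> xa, b \<mapsto> xb]"
  have dh0: "dom h0 = {a, b}" by (auto simp: h0_def)
  have h0W: "h0 \<in> W" using a b ab xa xb unfolding W_def pf_on_def h0_def by auto
  have eqh0: "g = h0" if "g \<in> W" "g \<subseteq>\<^sub>m h0" for g
    using map_le_dom_eq[OF that(2)] that(1) dh0 unfolding W_def by auto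
  have h0P: "h0 \<in> Prime W"
    unfolding Prime_def
  proof (intro CollectI conjI allI impI h0W)
    fix F assume F: "F \<subseteq> W \<and> compatible F \<and> h0 = pf_join F"
    have "F \<noteq> {}"
    proof
      assume "F = {}"
      hence "h0 = Map.empty" using F pf_join_empty by metis
      thus False using dh0 by auto
    qed
    then obtain f where f: "f \<in> F" by blast
    have "f \<subseteq>\<^sub>m h0" using F f pf_join_le by metis
    hence "f = h0" using eqh0 F f by blast
    thus "h0 \<in> F" using f by simp
  qed
  have "\<not> pf_less k h0" if k: "k \<in> Ext (Prime W)" for k
  proof
    assume kl: "pf_less k h0"
    obtain g where g: "g \<in> Prime W" "g \<subseteq>\<^sub>m k" using k unfolding Ext_char by blast
    have PW: "Prime W \<subseteq> W" by (auto simp: Prime_def)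
    have "g \<in> W" using g(1) PW by (rule subsetD[rotated])
    moreover have kh: "k \<subseteq>\<^sub>m h0" "k \<noteq> h0" using kl by (auto simp: pf_less_def)
    moreover have "g \<subseteq>\<^sub>m h0" using map_le_trans[OF g(2) kh(1)] .
    ultimately have "g = h0" using eqh0 by blast
    hence "h0 \<subseteq>\<^sub>m k" using g(2) by simp
    hence "k = h0" using map_le_antisym[OF kh(1)] by simp
    thus False using kh(2) by simp
  qed
  hence "tips (Prime W) h0 = {a, b}" unfolding tips_def dh0 by auto
  hence "card (tips (Prime W) h0) = 2" using ab by simp
  moreover assume "hist_join (star E I a) (star E I b) \<in> CC E I"
  hence "causally_complete (Prime W)" unfolding jW CC_def by (rule CollectE) (elim conjE)
  hence "card (tips (Prime W) h0) = 1" using h0P unfolding causally_complete_def by blast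
  ultimately show False by simp
qed

theorem proposition20:
  fixes E :: "'e set" and I :: "'e \<Rightarrow> 'i set"
  assumes "finite E"
    and "\<forall>\<omega>\<in>E. finite (I \<omega>) \<and> I \<omega> \<noteq> {}"
  shows "(\<forall>\<Theta>\<in>CC E I. \<forall>\<Theta>'\<in>CC E I. hist_meet \<Theta> \<Theta>' \<in> CC E I)
       \<and> (card E \<ge> 2 \<longrightarrow> (\<exists>\<Theta>\<in>CC E I. \<exists>\<Theta>'\<in>CC E I. hist_join \<Theta> \<Theta>' \<notin> CC E I))"
proof
  show "\<forall>\<Theta>\<in>CC E I. \<forall>\<Theta>'\<in>CC E I. hist_meet \<Theta> \<Theta>' \<in> CC E I"
  proof (intro ballI)
    fix \<Theta> \<Theta>' assume t: "\<Theta> \<in> CC E I" "\<Theta>' \<in> CC E I"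
    have Ine: "\<forall>\<omega>\<in>E. I \<omega> \<noteq> {}" using assms(2) by blast
    show "hist_meet \<Theta> \<Theta>' \<in> CC E I" by (rule meet_CC[OF assms(1) Ine t])
  qed
  show "card E \<ge> 2 \<longrightarrow> (\<exists>\<Theta>\<in>CC E I. \<exists>\<Theta>'\<in>CC E I. hist_join \<Theta> \<Theta>' \<notin> CC E I)"
  proof
    assume c2: "card E \<ge> 2"
    then obtain a b where ab: "a \<in> E" "b \<in> E" "a \<noteq> b"
    proof -
      have "E \<noteq> {}" using c2 by auto
      then obtain a where a: "a \<in> E" by blast
      have c1: "card (E - {a}) \<ge> 1" using c2 a assms(1) by simp
      have "E - {a} \<noteq> {}"
      proof
        assume "E - {a} = {}"
        with c1 show False by simp
      qed
      then obtain b where "b \<in> E - {a}" by blast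
      thus ?thesis using a that by blast
    qed
    show "\<exists>\<Theta>\<in>CC E I. \<exists>\<Theta>'\<in>CC E I. hist_join \<Theta> \<Theta>' \<notin> CC E I"
    proof (rule bexI)
      show "\<exists>\<Theta>'\<in>CC E I. hist_join (star E I a) \<Theta>' \<notin> CC E I"
        using join_not_CC[OF assms ab] star_CC[OF assms ab(2)] by blast
      show "star E I a \<in> CC E I" by (rule star_CC[OF assms ab(1)])
    qed
  qed
qed

end
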